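(* Let $a,b,c\in\mathbb{R}$ satisfy $a+b+c\equiv 0 \pmod{2\pi}$ and $\sin c\neq 0$. Let $P$ be the plane $\{(x,y,z): x\sin a+y\sin b+z\sin c=0\}$ and let $H$ be the hexagon $P\cap[-1,1]^3$. Let $E$ be the ellipse inscribed in $H$ (the unique ellipse contained in $H$ and tangent to all six sides of $H$). For $t\in(-1,1)$ let $E_t=\{(x,y)\in\mathbb{R}^2 : 1-x^2-y^2-t^2+2xyt=0\}$. Then the image of $E$ under the projection $(x,y,z)\mapsto(x,y)$ is $E_{\cos c}$.
   Context: For $t\in(-1,1)$, $E_t$ is an ellipse inscribed in the square $[-1,1]^2$, tangent to it at $\pm(t,1)$ and $\pm(1,t)$. *)

theory Defs
  imports "HOL-Analysis.Analysis"
begin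

type_synonym pt3 = "real \<times> real \<times> real"

definition plane_P :: "real \<Rightarrow> real \<Rightarrow> real \<Rightarrow> pt3 set" where
  "plane_P a b c = {(x,y,z). x * sin a + y * sin b + z * sin c = 0}"

definition cube3 :: "pt3 set" where
  "cube3 = {(x,y,z). -1 \<le> x \<and> x \<le> 1 \<and> -1 \<le> y \<and> y \<le> 1 \<and> -1 \<le> z \<and> z \<le> 1}"

definition hexH :: "real \<Rightarrow> real \<Rightarrow> real \<Rightarrow> pt3 set" where
  "hexH a b c = plane_P a b c \<inter> cube3"

definition coord3 :: "nat \<Rightarrow> pt3 \<Rightarrow> real" where
  "coord3 i p = (if i = 0 then fst p else if i = 1 then fst (snd p) else snd (snd p))"

text \<open>The sides of H: its intersections with the six faces of the cube
  (k = 0,1,2: faces x=1, y=1, z=1; k = 3,4,5: faces x=-1, y=-1, z=-1).\<close>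
definition hex_side :: "real \<Rightarrow> real \<Rightarrow> real \<Rightarrow> nat \<Rightarrow> pt3 set" where
  "hex_side a b c k = {p \<in> hexH a b c. coord3 (k mod 3) p = (if k < 3 then 1 else -1)}"

definition is_hexagon :: "real \<Rightarrow> real \<Rightarrow> real \<Rightarrow> bool" where
  "is_hexagon a b c \<longleftrightarrow>
     (\<forall>k<6. infinite (hex_side a b c k)) \<and>
     (\<forall>k<6. \<forall>l<6. k \<noteq> l \<longrightarrow> hex_side a b c k \<noteq> hex_side a b c l)"

text \<open>An ellipse in R^3 (lying in some plane): the image of the unit circle
  under an injective affine map, i.e. {C + cos s u + sin s v} with u, v linearly independent.\<close>
definition ellipse3 :: "pt3 set \<Rightarrow> bool" where
  "ellipse3 E \<longleftrightarrow> (\<exists>C u v. (\<forall>\<alpha> \<beta>. \<alpha> *\<^sub>R u + \<beta> *\<^sub>R v = 0 \<longrightarrow> \<alpha> = 0 \<and> \<beta> = 0) \<and>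
       E = {C + cos s *\<^sub>R u + sin s *\<^sub>R v | s. True})"

text \<open>E is tangent to the segment S: the line through S meets E in exactly one point,
  and that point lies on S.\<close>
definition tangent_to_segment :: "pt3 set \<Rightarrow> pt3 set \<Rightarrow> bool" where
  "tangent_to_segment E S \<longleftrightarrow> (\<exists>q\<in>S. E \<inter> affine hull S = {q})"

definition inscribed_ellipse :: "real \<Rightarrow> real \<Rightarrow> real \<Rightarrow> pt3 set \<Rightarrow> bool" where
  "inscribed_ellipse a b c E \<longleftrightarrow> ellipse3 E \<and> E \<subseteq> hexH a b c \<and>
     (\<forall>k<6. tangent_to_segment E (hex_side a b c k))"

definition E_t :: "real \<Rightarrow> (real \<times> real) set" where
  "E_t t = {(x,y). 1 - x^2 - y^2 - t^2 + 2*x*y*t = 0}"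

definition proj_xy :: "pt3 \<Rightarrow> real \<times> real" where
  "proj_xy p = (fst p, fst (snd p))"

end

theory Submission
  imports Defs
begin

lemma amp_lemma:
  fixes C u v :: real
  assumes b: "\<And>s. -1 \<le> C + u * cos s + v * sin s \<and> C + u * cos s + v * sin s \<le> 1"
    and e1: "\<exists>s. C + u * cos s + v * sin s = 1"
    and e2: "\<exists>s. C + u * cos s + v * sin s = -1"
  shows "C = 0 \<and> u\<^sup>2 + v\<^sup>2 = 1"
proof -
  define R where "R = sqrt (u\<^sup>2 + v\<^sup>2)"
  have R2: "R\<^sup>2 = u\<^sup>2 + v\<^sup>2" "R \<ge> 0" unfolding R_def by auto
  have cs: "\<bar>u * cos s + v * sin s\<bar> \<le> R" for s
  proof -
    have "(u * cos s + v * sin s)\<^sup>2 + (u * sin s - v * cos s)\<^sup>2 = (u\<^sup>2 + v\<^sup>2) * ((sin s)\<^sup>2 + (cos s)\<^sup>2)"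
      by algebra
    then have "(u * cos s + v * sin s)\<^sup>2 \<le> (u\<^sup>2 + v\<^sup>2) * ((cos s)\<^sup>2 + (sin s)\<^sup>2)"
      by (smt (verit) zero_le_power2)
    then have "(u * cos s + v * sin s)\<^sup>2 \<le> R\<^sup>2" using R2 by simp
    then show ?thesis using R2(2) by (metis abs_of_nonneg power2_le_imp_le abs_ge_zero power2_abs)
  qed
  obtain s1 where s1: "C + u * cos s1 + v * sin s1 = 1" using e1 by blast
  obtain s2 where s2: "C + u * cos s2 + v * sin s2 = -1" using e2 by blast
  have Rp: "R > 0"
  proof (rule ccontr)
    assume "\<not> R > 0"
    then have "R = 0" using R2 by auto
    then show False using cs[of s1] cs[of s2] s1 s2 by auto
  qed
  have "(u/R)\<^sup>2 + (v/R)\<^sup>2 = (u\<^sup>2 + v\<^sup>2) / R\<^sup>2" by (simp add: power_divide add_divide_distrib)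
  also have "\<dots> = 1" unfolding R2(1)[symmetric] using Rp by simp
  finally have "(u/R)\<^sup>2 + (v/R)\<^sup>2 = 1" .
  then obtain t where t: "u/R = cos t" "v/R = sin t" using sincos_total_2pi by metis
  have ut: "u = R * cos t" "v = R * sin t" using t Rp by (auto simp: field_simps)
  have f1: "C + u * cos t + v * sin t = C + R"
  proof -
    have "u * cos t + v * sin t = R * ((cos t)\<^sup>2 + (sin t)\<^sup>2)"
      unfolding ut by algebra
    then show ?thesis by simp
  qed
  have f2: "C + u * cos (t+pi) + v * sin (t+pi) = C - R"
    using f1 by simp
  have "C + R \<le> 1" using b[of t] f1 by linarith
  moreover have "C - R \<ge> -1" using b[of "t+pi"] f2 by linarith
  moreover have "1 \<le> C + R" using cs[of s1] s1 by linarith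
  moreover have "-1 \<ge> C - R" using cs[of s2] s2 by linarith
  ultimately have "C = 0" "R = 1" by linarith+
  then show ?thesis using R2 by simp
qed

lemma tangent_point:
  assumes "tangent_to_segment E (hex_side a b c k)"
  shows "\<exists>q\<in>E. coord3 (k mod 3) q = (if k < 3 then 1 else -1)"
proof -
  obtain q where q: "q \<in> hex_side a b c k" "E \<inter> affine hull (hex_side a b c k) = {q}"
    using assms unfolding tangent_to_segment_def by blast
  then have "q \<in> E" by blast
  then show ?thesis using q(1) unfolding hex_side_def by blast
qed

theorem lemma3p2:
  fixes a b c :: real and E :: "pt3 set"
  assumes "\<exists>k::int. a + b + c = 2 * pi * of_int k"
    and "sin c \<noteq> 0"
    and "is_hexagon a b c"
    and "inscribed_ellipse a b c E"
  shows "proj_xy ` E = E_t (cos c)"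
proof -
  obtain m :: int where m: "a + b + c = 2 * pi * of_int m" using assms(1) by blast
  have cdef: "c = 2 * pi * of_int m - (a + b)" using m by simp
  have sc: "sin c = - (sin a * cos b + cos a * sin b)"
    unfolding cdef by (simp add: sin_diff sin_int_2pin cos_int_2pin sin_add)
  have cc: "cos c = cos a * cos b - sin a * sin b"
    unfolding cdef by (simp add: cos_diff sin_int_2pin cos_int_2pin cos_add)
  have ins: "ellipse3 E" "E \<subseteq> hexH a b c" "\<And>k. k < 6 \<Longrightarrow> tangent_to_segment E (hex_side a b c k)"
    using assms(4) unfolding inscribed_ellipse_def by auto
  obtain C u v where Edef: "E = {C + cos s *\<^sub>R u + sin s *\<^sub>R v | s. True}"
    using ins(1) unfolding ellipse3_def by blast
  obtain C1 C2 C3 where C: "C = (C1, C2, C3)" by (cases C) auto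
  obtain u1 u2 u3 where u: "u = (u1, u2, u3)" by (cases u) auto
  obtain v1 v2 v3 where v: "v = (v1, v2, v3)" by (cases v) auto
  define p where "p s = (C1 + u1 * cos s + v1 * sin s, C2 + u2 * cos s + v2 * sin s, C3 + u3 * cos s + v3 * sin s)" for s
  have Ep: "E = range p"
    unfolding Edef C u v p_def by (auto simp: algebra_simps)
  have inH: "p s \<in> hexH a b c" for s using ins(2) Ep by auto
  have cube: "-1 \<le> C1 + u1 * cos s + v1 * sin s \<and> C1 + u1 * cos s + v1 * sin s \<le> 1"
     "-1 \<le> C2 + u2 * cos s + v2 * sin s \<and> C2 + u2 * cos s + v2 * sin s \<le> 1"
     "-1 \<le> C3 + u3 * cos s + v3 * sin s \<and> C3 + u3 * cos s + v3 * sin s \<le> 1" for s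
    using inH[of s] unfolding hexH_def cube3_def p_def by auto
  have pl: "(C1 + u1 * cos s + v1 * sin s) * sin a + (C2 + u2 * cos s + v2 * sin s) * sin b
      + (C3 + u3 * cos s + v3 * sin s) * sin c = 0" for s
    using inH[of s] unfolding hexH_def plane_P_def p_def by auto
  have tp: "\<exists>s. coord3 (k mod 3) (p s) = (if k < 3 then 1 else -1)" if "k < 6" for k
    using tangent_point[OF ins(3)[OF that]] Ep by auto
  have A1: "C1 = 0 \<and> u1\<^sup>2 + v1\<^sup>2 = 1"
    using amp_lemma[OF cube(1)] tp[of 0] tp[of 3] by (auto simp: coord3_def p_def)
  have A2: "C2 = 0 \<and> u2\<^sup>2 + v2\<^sup>2 = 1"
    using amp_lemma[OF cube(2)] tp[of 1] tp[of 4] by (auto simp: coord3_def p_def)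
  have A3: "C3 = 0 \<and> u3\<^sup>2 + v3\<^sup>2 = 1"
    using amp_lemma[OF cube(3)] tp[of 2] tp[of 5] by (auto simp: coord3_def p_def)
  have pu: "u1 * sin a + u2 * sin b + u3 * sin c = 0" using pl[of 0] A1 A2 A3 by simp
  have pv: "v1 * sin a + v2 * sin b + v3 * sin c = 0" using pl[of "pi/2"] A1 A2 A3 by simp
  define k where "k = u1 * u2 + v1 * v2"
  have pu': "u3 * sin c = -(u1 * sin a + u2 * sin b)" using pu by linarith
  have pv': "v3 * sin c = -(v1 * sin a + v2 * sin b)" using pv by linarith
  have "(u3\<^sup>2 + v3\<^sup>2) * (sin c)\<^sup>2 = (u3 * sin c)\<^sup>2 + (v3 * sin c)\<^sup>2"
    by (simp add: power_mult_distrib algebra_simps)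
  also have "\<dots> = (u1 * sin a + u2 * sin b)\<^sup>2 + (v1 * sin a + v2 * sin b)\<^sup>2"
    unfolding pu' pv' by algebra
  finally have "(u3\<^sup>2 + v3\<^sup>2) * (sin c)\<^sup>2 = (u1 * sin a + u2 * sin b)\<^sup>2 + (v1 * sin a + v2 * sin b)\<^sup>2" .
  then have "(sin c)\<^sup>2 = (u1 * sin a + u2 * sin b)\<^sup>2 + (v1 * sin a + v2 * sin b)\<^sup>2"
    using A3 by simp
  then have key: "(sin c)\<^sup>2 = (sin a)\<^sup>2 * (u1\<^sup>2 + v1\<^sup>2) + (sin b)\<^sup>2 * (u2\<^sup>2 + v2\<^sup>2) + 2 * sin a * sin b * k"
    unfolding k_def by algebra
  have neq: "\<And>k l. k < 6 \<Longrightarrow> l < 6 \<Longrightarrow> k \<noteq> l \<Longrightarrow> hex_side a b c k \<noteq> hex_side a b c l"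
    using assms(3) unfolding is_hexagon_def by blast
  have sab: "sin a \<noteq> 0 \<and> sin b \<noteq> 0"
  proof (rule ccontr)
    assume "\<not> (sin a \<noteq> 0 \<and> sin b \<noteq> 0)"
    then have "sin a = 0 \<or> sin b = 0" by simp
    then show False
    proof
      assume sa: "sin a = 0"
      then have ca: "cos a = 1 \<or> cos a = -1" using sin_cos_squared_add[of a]
        by (simp add: power2_eq_square) (metis mult_cancel_left1 mult_minus1 square_eq_1_iff)
      have sb: "sin b \<noteq> 0" using assms(2) sc sa by auto
      have yz: "y = cos a * z" if "(x,y,z) \<in> plane_P a b c" for x y z
      proof -
        have "y * sin b + z * sin c = 0" using that sa unfolding plane_P_def by simp
        then have "sin b * (y - cos a * z) = 0" using sc sa by (simp add: algebra_simps)
        then show ?thesis using sb by simp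
      qed
      from ca show False
      proof
        assume c1: "cos a = 1"
        have "hex_side a b c 1 = hex_side a b c 2"
          unfolding hex_side_def coord3_def hexH_def by (auto dest: yz simp: c1)
        then show False using neq[of 1 2] by simp
      next
        assume c1: "cos a = -1"
        have "hex_side a b c 1 = hex_side a b c 5"
          unfolding hex_side_def coord3_def hexH_def by (force dest: yz simp: c1)
        then show False using neq[of 1 5] by simp
      qed
    next
      assume sb: "sin b = 0"
      then have cb: "cos b = 1 \<or> cos b = -1" using sin_cos_squared_add[of b]
        by (simp add: power2_eq_square) (metis mult_cancel_left1 mult_minus1 square_eq_1_iff)
      have sa: "sin a \<noteq> 0" using assms(2) sc sb by auto
      have xz: "x = cos b * z" if "(x,y,z) \<in> plane_P a b c" for x y z
      proof -
        have "x * sin a + z * sin c = 0" using that sb unfolding plane_P_def by simp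
        then have "sin a * (x - cos b * z) = 0" using sc sb by (simp add: algebra_simps)
        then show ?thesis using sa by simp
      qed
      from cb show False
      proof
        assume c1: "cos b = 1"
        have "hex_side a b c 0 = hex_side a b c 2"
          unfolding hex_side_def coord3_def hexH_def by (auto dest: xz simp: c1)
        then show False using neq[of 0 2] by simp
      next
        assume c1: "cos b = -1"
        have "hex_side a b c 0 = hex_side a b c 5"
          unfolding hex_side_def coord3_def hexH_def by (force dest: xz simp: c1)
        then show False using neq[of 0 5] by simp
      qed
    qed
  qed
  have kc: "k = cos c"
  proof -
    have "(sin c)\<^sup>2 = (sin a)\<^sup>2 + (sin b)\<^sup>2 + 2 * sin a * sin b * k" using key A1 A2 by simp
    moreover have "(sin a)\<^sup>2 + (cos a)\<^sup>2 = 1" "(sin b)\<^sup>2 + (cos b)\<^sup>2 = 1" by simp_all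
    ultimately have "sin a * sin b * (sin a * sin b + k - cos a * cos b) = 0"
      unfolding sc by algebra
    then show ?thesis using sab cc by simp
  qed
  show ?thesis
  proof (rule set_eqI, rule iffI)
    fix w assume "w \<in> proj_xy ` E"
    then obtain s where w: "w = (u1 * cos s + v1 * sin s, u2 * cos s + v2 * sin s)"
      using Ep A1 A2 unfolding proj_xy_def p_def by auto
    have "(sin s)\<^sup>2 + (cos s)\<^sup>2 = 1" by simp
    then have "1 - (u1 * cos s + v1 * sin s)^2 - (u2 * cos s + v2 * sin s)^2 - k^2
       + 2 * (u1 * cos s + v1 * sin s) * (u2 * cos s + v2 * sin s) * k = 0"
      using A1 A2 unfolding k_def by algebra
    then show "w \<in> E_t (cos c)" unfolding w E_t_def kc[symmetric] by simp
  next
    fix w assume "w \<in> E_t (cos c)"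
    then obtain x y where w: "w = (x,y)" and eq: "1 - x^2 - y^2 - k^2 + 2 * x * y * k = 0"
      unfolding E_t_def kc[symmetric] by auto
    define D where "D = u1 * v2 - v1 * u2"
    have D2: "D^2 = 1 - k^2" using A1 A2 unfolding D_def k_def by algebra
    have "k^2 \<noteq> 1"
    proof
      assume "k^2 = 1"
      then have "(sin c)^2 = 0" using sin_cos_squared_add[of c] unfolding kc by linarith
      then show False using assms(2) by simp
    qed
    then have Dn: "D \<noteq> 0" using D2 by auto
    define w1 where "w1 = (x * v2 - y * v1)/D"
    define w2 where "w2 = (u1 * y - u2 * x)/D"
    have "(x * v2 - y * v1)^2 + (u1 * y - u2 * x)^2 = D^2"
      using A1 A2 eq D2 unfolding k_def by algebra
    then have "w1^2 + w2^2 = 1" using Dn unfolding w1_def w2_def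
      by (simp add: power_divide add_divide_distrib[symmetric])
    then obtain s where s: "w1 = cos s" "w2 = sin s" using sincos_total_2pi by metis
    have n1: "u1 * (x * v2 - y * v1) + v1 * (u1 * y - u2 * x) = x * D" unfolding D_def by algebra
    have n2: "u2 * (x * v2 - y * v1) + v2 * (u1 * y - u2 * x) = y * D" unfolding D_def by algebra
    have "u1 * w1 + v1 * w2 = (u1 * (x * v2 - y * v1) + v1 * (u1 * y - u2 * x)) / D"
      unfolding w1_def w2_def by (simp add: add_divide_distrib)
    also have "\<dots> = x" unfolding n1 using Dn by simp
    finally have e1: "u1 * w1 + v1 * w2 = x" .
    have "u2 * w1 + v2 * w2 = (u2 * (x * v2 - y * v1) + v2 * (u1 * y - u2 * x)) / D"
      unfolding w1_def w2_def by (simp add: add_divide_distrib)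
    also have "\<dots> = y" unfolding n2 using Dn by simp
    finally have e2: "u2 * w1 + v2 * w2 = y" .
    note e1 e2
    then have "w = proj_xy (p s)" unfolding w proj_xy_def p_def using A1 A2 s by simp
    then show "w \<in> proj_xy ` E" using Ep by auto
  qed
qed

end
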